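(* Let $p$ be a homogeneous polynomial on $\mathbb{R}^n$ of degree $d$ that is hyperbolic, with hyperbolic cone $\Lambda_+$ and its interior $\Lambda_{++}$. Let $A\in\mathbb{R}^{m\times n}$, $b\in\mathbb{R}^m$, $c\in\mathbb{R}^n$, and consider the hyperbolic program $$\mathsf{HP}:\quad \min_x \langle c,x\rangle \ \text{ s.t. } Ax=b,\ x\in\Lambda_+ .$$ Then for every $e\in\Lambda_{++}$ and every $0<\alpha\le 1$, the quadratic program $\mathsf{QP}_e(\alpha)$ is a relaxation of $\mathsf{HP}$, i.e. every feasible point of $\mathsf{HP}$ is feasible for $\mathsf{QP}_e(\alpha)$.
   Context: A real homogeneous polynomial $p\in\mathbb{R}[x_1,\dots,x_n]$ is hyperbolic in direction $e_0\in\mathbb{R}^n$ if for every $x\in\mathbb{R}^n$ the univariate polynomial $t\mapsto p(te_0-x)$ has only real roots; these roots $\lambda_1(x)\ge\dots\ge\lambda_d(x)$ are the hyperbolic eigenvalues of $x$. The hyperbolic cone is $\Lambda_+=\{x:\lambda_d(x)\ge 0\}$ and $\Lambda_{++}=\{x:\lambda_d(x)>0\}$; it is assumed that $\Lambda_+$ contains no nontrivial linear subspace. For $e\in\Lambda_{++}$, let $H(e)=\nabla^2(-\ln p)(e)$ (positive definite), $\langle u,v\rangle_e=u^\top H(e)v$, $\|v\|_e=\langle v,v\rangle_e^{1/2}$, and the closed quadratic cone $K_e(\alpha)=\{x\in\mathbb{R}^n:\langle e,x\rangle_e\ge\alpha\|x\|_e\}$. The quadratic program is $\mathsf{QP}_e(\alpha):\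 \min_x\langle c,x\rangle$ s.t. $Ax=b$, $x\in K_e(\alpha)$. *)

theory Defs
  imports "HOL-Analysis.Analysis" "HOL-Computational_Algebra.Polynomial"
begin

definition homogeneous_deg :: "(real^'n \<Rightarrow> real) \<Rightarrow> nat \<Rightarrow> bool" where
  "homogeneous_deg p d \<longleftrightarrow> (\<forall>t x. p (t *\<^sub>R x) = t ^ d * p x)"

definition hyperbolic_in :: "(real^'n \<Rightarrow> real) \<Rightarrow> real^'n \<Rightarrow> bool" where
  "hyperbolic_in p e0 \<longleftrightarrow> p e0 \<noteq> 0 \<and>
     (\<forall>x. \<exists>q :: real poly. (\<forall>t. poly q t = p (t *\<^sub>R e0 - x)) \<and>
           (\<forall>z :: complex. poly (map_poly complex_of_real q) z = 0 \<longrightarrow> z \<in> \<real>))"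

text \<open>Hyperbolic cone: smallest hyperbolic eigenvalue (root of t -> p(t e0 - x)) is >= 0, resp. > 0.\<close>
definition hcone :: "(real^'n \<Rightarrow> real) \<Rightarrow> real^'n \<Rightarrow> (real^'n) set" where
  "hcone p e0 = {x. \<forall>t. p (t *\<^sub>R e0 - x) = 0 \<longrightarrow> t \<ge> 0}"

definition hcone_int :: "(real^'n \<Rightarrow> real) \<Rightarrow> real^'n \<Rightarrow> (real^'n) set" where
  "hcone_int p e0 = {x. \<forall>t. p (t *\<^sub>R e0 - x) = 0 \<longrightarrow> t > 0}"

definition hess_form :: "(real^'n \<Rightarrow> real) \<Rightarrow> real^'n \<Rightarrow> real^'n \<Rightarrow> real^'n \<Rightarrow> real" where
  "hess_form f e u v = deriv (\<lambda>s. deriv (\<lambda>t. f (e + s *\<^sub>R u + t *\<^sub>R v)) 0) 0"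

text \<open>Local inner product <u,v>_e = u^T H(e) v with H(e) the Hessian of -ln p
  (written -ln |p|, which coincides with -ln p where p > 0 and has the same Hessian).\<close>
definition loc_inner :: "(real^'n \<Rightarrow> real) \<Rightarrow> real^'n \<Rightarrow> real^'n \<Rightarrow> real^'n \<Rightarrow> real" where
  "loc_inner p e u v = hess_form (\<lambda>y. - ln \<bar>p y\<bar>) e u v"

definition loc_norm :: "(real^'n \<Rightarrow> real) \<Rightarrow> real^'n \<Rightarrow> real^'n \<Rightarrow> real" where
  "loc_norm p e v = sqrt (loc_inner p e v v)"

definition quad_cone :: "(real^'n \<Rightarrow> real) \<Rightarrow> real^'n \<Rightarrow> real \<Rightarrow> (real^'n) set" where
  "quad_cone p e \<alpha> = {x. loc_inner p e e x \<ge> \<alpha> * loc_norm p e x}"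

text \<open>Feasible sets of HP and QP_e(alpha) (the objective c plays no role in feasibility).\<close>
definition HP_feasible :: "(real^'n \<Rightarrow> real) \<Rightarrow> real^'n \<Rightarrow> real^'n^'m \<Rightarrow> real^'m \<Rightarrow> (real^'n) set" where
  "HP_feasible p e0 A b = {x. A *v x = b \<and> x \<in> hcone p e0}"

definition QP_feasible :: "(real^'n \<Rightarrow> real) \<Rightarrow> real^'n \<Rightarrow> real \<Rightarrow> real^'n^'m \<Rightarrow> real^'m \<Rightarrow> (real^'n) set" where
  "QP_feasible p e \<alpha> A b = {x. A *v x = b \<and> x \<in> quad_cone p e \<alpha>}"

end

theory Submission
  imports Defs "HOL-Computational_Algebra.Fundamental_Theorem_Algebra"
begin


definition cvec :: "real^'n \<Rightarrow> complex^'n" where "cvec y = (\<chi> i. complex_of_real (y$i))"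
definition realvec :: "complex^'n \<Rightarrow> bool" where "realvec z \<longleftrightarrow> (\<forall>i. z$i \<in> \<real>)"

lemma linear_expand:
  fixes f :: "real^'n \<Rightarrow> real"
  assumes "bounded_linear f"
  shows "f y = (\<Sum>i\<in>UNIV. y$i * f (axis i 1))"
proof -
  have "y = (\<Sum>i\<in>UNIV. (y$i) *\<^sub>R axis i 1)"
    using basis_expansion[of y] by (simp add: scalar_mult_eq_scaleR)
  hence "f y = f (\<Sum>i\<in>UNIV. (y$i) *\<^sub>R axis i 1)" by simp
  also have "\<dots> = (\<Sum>i\<in>UNIV. y$i * f (axis i 1))"
    using assms by (simp add: linear_sum bounded_linear.linear linear_scale)
  finally show ?thesis .
qed

lemma continuous_on_vec_comp: "continuous_on UNIV (\<lambda>z::complex^'n. z$i)"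
  by (intro linear_continuous_on bounded_linear_vec_nth)

definition goodext :: "(real^'n \<Rightarrow> real) \<Rightarrow> (complex^'n \<Rightarrow> complex) \<Rightarrow> bool" where
 "goodext f fC \<longleftrightarrow> (\<forall>y. fC (cvec y) = of_real (f y)) \<and> continuous_on UNIV fC \<and>
   (\<forall>z0 z1. \<exists>P. (\<forall>t. fC (z0 + t *s z1) = poly P t) \<and> (realvec z0 \<and> realvec z1 \<longrightarrow> (\<forall>k. coeff P k \<in> \<real>)))"

lemma construct:
  fixes f :: "real^'n \<Rightarrow> real"
  assumes "real_polynomial_function f"
  shows "\<exists>fC. goodext f fC"
  using assms
proof induction
  case (linear f)
  define fC where "fC = (\<lambda>z::complex^'n. \<Sum>i\<in>UNIV. of_real (f (axis i 1)) * z$i)"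
  have "goodext f fC"
    unfolding goodext_def
  proof (intro conjI allI)
    fix y show "fC (cvec y) = of_real (f y)"
      unfolding fC_def cvec_def linear_expand[OF linear, of y] by (simp add: mult.commute)
  next
    show "continuous_on UNIV fC" unfolding fC_def
      by (intro continuous_intros continuous_on_vec_comp)
  next
    fix z0 z1 :: "complex^'n"
    let ?P = "[: \<Sum>i\<in>UNIV. of_real (f (axis i 1)) * z0$i, \<Sum>i\<in>UNIV. of_real (f (axis i 1)) * z1$i :]"
    show "\<exists>P. (\<forall>t. fC (z0 + t *s z1) = poly P t) \<and> (realvec z0 \<and> realvec z1 \<longrightarrow> (\<forall>k. coeff P k \<in> \<real>))"
    proof (intro exI[of _ ?P] conjI allI impI)
      fix t show "fC (z0 + t *s z1) = poly ?P t"
        unfolding fC_def by (simp add: algebra_simps sum.distrib sum_distrib_left)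
    next
      fix k assume "realvec z0 \<and> realvec z1"
      thus "coeff ?P k \<in> \<real>" unfolding realvec_def
        by (auto simp: coeff_pCons split: nat.splits intro!: sum_in_Reals Reals_mult)
    qed
  qed
  thus ?case by blast
next
  case (const c)
  have "goodext (\<lambda>x. c) (\<lambda>z. of_real c)"
    unfolding goodext_def
    by (auto intro!: exI[of _ "[:of_real c:]"] simp: coeff_pCons split: nat.splits)
  thus ?case by blast
next
  case (add f g)
  then obtain fC gC where f: "goodext f fC" and g: "goodext g gC" by blast
  have "goodext (\<lambda>x. f x + g x) (\<lambda>z. fC z + gC z)"
    unfolding goodext_def
  proof (intro conjI allI)
    show "\<And>y. fC (cvec y) + gC (cvec y) = complex_of_real (f y + g y)"
      using f g by (simp add: goodext_def)
    show "continuous_on UNIV (\<lambda>z. fC z + gC z)"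
      using f g by (intro continuous_intros) (auto simp: goodext_def)
  next
    fix z0 z1 :: "complex^'n"
    obtain P where P: "\<forall>t. fC (z0 + t *s z1) = poly P t" "realvec z0 \<and> realvec z1 \<longrightarrow> (\<forall>k. coeff P k \<in> \<real>)"
      using f unfolding goodext_def by blast
    obtain Q where Q: "\<forall>t. gC (z0 + t *s z1) = poly Q t" "realvec z0 \<and> realvec z1 \<longrightarrow> (\<forall>k. coeff Q k \<in> \<real>)"
      using g unfolding goodext_def by blast
    show "\<exists>P. (\<forall>t. fC (z0 + t *s z1) + gC (z0 + t *s z1) = poly P t) \<and> (realvec z0 \<and> realvec z1 \<longrightarrow> (\<forall>k. coeff P k \<in> \<real>))"
      using P Q by (intro exI[of _ "P + Q"]) auto
  qed
  thus ?case by blast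
next
  case (mult f g)
  then obtain fC gC where f: "goodext f fC" and g: "goodext g gC" by blast
  have "goodext (\<lambda>x. f x * g x) (\<lambda>z. fC z * gC z)"
    unfolding goodext_def
  proof (intro conjI allI)
    show "\<And>y. fC (cvec y) * gC (cvec y) = complex_of_real (f y * g y)"
      using f g by (simp add: goodext_def)
    show "continuous_on UNIV (\<lambda>z. fC z * gC z)"
      using f g by (intro continuous_intros) (auto simp: goodext_def)
  next
    fix z0 z1 :: "complex^'n"
    obtain P where P: "\<forall>t. fC (z0 + t *s z1) = poly P t" "realvec z0 \<and> realvec z1 \<longrightarrow> (\<forall>k. coeff P k \<in> \<real>)"
      using f unfolding goodext_def by blast
    obtain Q where Q: "\<forall>t. gC (z0 + t *s z1) = poly Q t" "realvec z0 \<and> realvec z1 \<longrightarrow> (\<forall>k. coeff Q k \<in> \<real>)"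
      using g unfolding goodext_def by blast
    show "\<exists>P. (\<forall>t. fC (z0 + t *s z1) * gC (z0 + t *s z1) = poly P t) \<and> (realvec z0 \<and> realvec z1 \<longrightarrow> (\<forall>k. coeff P k \<in> \<real>))"
      using P Q by (intro exI[of _ "P * Q"]) (auto simp: coeff_mult intro!: sum_in_Reals Reals_mult)
  qed
  thus ?case by blast
qed



lemma poly_eq_nonzero:
  fixes P Q :: "complex poly"
  assumes "\<And>x. x \<noteq> 0 \<Longrightarrow> poly P x = poly Q x"
  shows "P = Q"
proof (rule ccontr)
  assume "P \<noteq> Q"
  hence "P - Q \<noteq> 0" by simp
  hence "finite {x. poly (P - Q) x = 0}" by (rule poly_roots_finite)
  moreover have "UNIV - {0} \<subseteq> {x. poly (P - Q) x = 0}" using assms by auto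
  ultimately have "finite (UNIV - {0::complex})" by (rule finite_subset[rotated])
  thus False by (simp add: infinite_UNIV_char_0)
qed

lemma poly_eq_reals:
  fixes P Q :: "complex poly"
  assumes "\<And>x::real. poly P (of_real x) = poly Q (of_real x)"
  shows "P = Q"
proof (rule ccontr)
  assume "P \<noteq> Q"
  hence "P - Q \<noteq> 0" by simp
  hence "finite {x. poly (P - Q) x = 0}" by (rule poly_roots_finite)
  moreover have "range complex_of_real \<subseteq> {x. poly (P - Q) x = 0}" using assms by auto
  ultimately have "finite (range complex_of_real)" by (rule finite_subset[rotated])
  moreover have "inj complex_of_real" by (simp add: inj_on_def)
  ultimately have "finite (UNIV :: real set)" using finite_imageD by blast
  thus False by (simp add: infinite_UNIV_char_0)
qed

lemma root_near_aux:
  fixes P :: "complex poly"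
  assumes "\<And>r. poly P r = 0 \<Longrightarrow> \<epsilon> \<le> norm (z - r)" "\<epsilon> > 0"
  shows "norm (lead_coeff P) * \<epsilon> ^ degree P \<le> norm (poly P z)"
  using assms(1)
proof (induction "degree P" arbitrary: P)
  case 0
  then obtain c where "P = [:c:]" by (metis degree_eq_zeroE)
  thus ?case by simp
next
  case (Suc n)
  hence "\<not> constant (poly P)" by (subst constant_degree) simp
  then obtain r where r: "poly P r = 0" using fundamental_theorem_of_algebra by blast
  then obtain Q where PQ: "P = [:-r, 1:] * Q" by (metis dvdE poly_eq_0_iff_dvd)
  have Q0: "Q \<noteq> 0" using PQ Suc.hyps(2) by auto
  have "degree ([:-r, 1:] * Q) = degree [:-r, 1:] + degree Q"
    by (rule degree_mult_eq) (use Q0 in auto)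
  hence dQ: "degree Q = n" using PQ Suc.hyps(2) by simp
  have "lead_coeff ([:-r, 1:] * Q) = lead_coeff [:-r, 1:] * lead_coeff Q"
    by (rule lead_coeff_mult)
  hence lQ: "lead_coeff P = lead_coeff Q" using PQ by (simp del: mult_pCons_left)
  have "\<And>s. poly Q s = 0 \<Longrightarrow> \<epsilon> \<le> norm (z - s)"
    using Suc.prems PQ by auto
  hence IH: "norm (lead_coeff Q) * \<epsilon> ^ n \<le> norm (poly Q z)"
    using Suc.hyps(1)[of Q] dQ by auto
  have er: "\<epsilon> \<le> norm (z - r)" using Suc.prems r by auto
  have "norm (lead_coeff P) * \<epsilon> ^ degree P = \<epsilon> * (norm (lead_coeff Q) * \<epsilon> ^ n)"
    using Suc.hyps(2)[symmetric] lQ by simp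
  also have "\<dots> \<le> norm (z - r) * norm (poly Q z)"
    using er IH assms(2) by (intro mult_mono) auto
  also have "\<dots> = norm ((z - r) * poly Q z)" by (simp add: norm_mult)
  also have "\<dots> = norm (poly P z)" unfolding PQ by (simp add: algebra_simps)
  finally show ?case .
qed

locale hsetup =
  fixes p :: "real^'n \<Rightarrow> real" and d :: nat and e0 :: "real^'n" and pC :: "complex^'n \<Rightarrow> complex"
  assumes ext: "goodext p pC" and hom: "homogeneous_deg p d" and hyp: "hyperbolic_in p e0"
begin

lemma pC_real: "pC (cvec y) = of_real (p y)" using ext by (simp add: goodext_def)
lemma pC_cont: "continuous_on UNIV pC" using ext by (simp add: goodext_def)
lemma pC_line: "\<exists>P. (\<forall>t. pC (z0 + t *s z1) = poly P t) \<and> (realvec z0 \<and> realvec z1 \<longrightarrow> (\<forall>k. coeff P k \<in> \<real>))"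
  using ext by (simp add: goodext_def)

lemma pC_hom_real: "pC (c *s cvec y) = c ^ d * of_real (p y)"
proof -
  obtain P where P: "\<And>t. pC (0 + t *s cvec y) = poly P t" using pC_line by blast
  have "P = monom (of_real (p y)) d"
  proof (rule poly_eq_reals)
    fix x :: real
    have "of_real x *s cvec y = cvec (x *\<^sub>R y)" by (simp add: vec_eq_iff cvec_def)
    hence "poly P (of_real x) = of_real (p (x *\<^sub>R y))" using P[of "of_real x"] by (simp add: pC_real)
    also have "\<dots> = of_real (x ^ d * p y)" using hom by (simp add: homogeneous_deg_def)
    finally show "poly P (of_real x) = poly (monom (of_real (p y)) d) (of_real x)"
      by (simp add: poly_monom mult.commute)
  qed
  thus ?thesis using P[of c] by (simp add: poly_monom mult.commute)
qed

lemma pC_hom: "pC (c *s z) = c ^ d * pC z"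
proof -
  define a where "a = (\<chi> i. Re (z$i))"
  define b where "b = (\<chi> i. Im (z$i))"
  have z: "z = cvec a + \<i> *s cvec b" by (simp add: vec_eq_iff cvec_def a_def b_def complex_eq_iff)
  obtain P1 where P1: "\<And>t. pC (c *s cvec a + t *s (c *s cvec b)) = poly P1 t" using pC_line by blast
  obtain P2 where P2: "\<And>t. pC (cvec a + t *s cvec b) = poly P2 t" using pC_line by blast
  have "P1 = smult (c ^ d) P2"
  proof (rule poly_eq_reals)
    fix x :: real
    have e1: "c *s cvec a + of_real x *s (c *s cvec b) = c *s cvec (a + x *\<^sub>R b)"
      by (simp add: vec_eq_iff cvec_def algebra_simps)
    have e2: "cvec a + of_real x *s cvec b = cvec (a + x *\<^sub>R b)"
      by (simp add: vec_eq_iff cvec_def algebra_simps)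
    show "poly P1 (of_real x) = poly (smult (c ^ d) P2) (of_real x)"
      using P1[of "of_real x"] P2[of "of_real x"] e1 e2 by (simp add: pC_hom_real pC_real)
  qed
  have eqv: "c *s z = c *s cvec a + \<i> *s (c *s cvec b)"
    by (simp add: z vec_eq_iff algebra_simps)
  have "pC (c *s z) = pC (c *s cvec a + \<i> *s (c *s cvec b))" by (simp only: eqv)
  also have "\<dots> = poly P1 \<i>" by (rule P1)
  also have "\<dots> = c ^ d * poly P2 \<i>" using \<open>P1 = smult (c ^ d) P2\<close> by simp
  also have "\<dots> = c ^ d * pC z" using P2[of \<i>] z by simp
  finally show ?thesis .
qed

lemma line_lead:
  "\<exists>P. (\<forall>t. pC (z0 + t *s z1) = poly P t) \<and> degree P \<le> d \<and> coeff P d = pC z1"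
proof -
  obtain P where P: "\<And>t. pC (z0 + t *s z1) = poly P t" using pC_line by blast
  obtain R where R: "\<And>t. pC (z1 + t *s z0) = poly R t" using pC_line by blast
  have eq: "monom 1 (degree R) * P = monom 1 d * reflect_poly R"
  proof (rule poly_eq_nonzero)
    fix t :: complex assume t: "t \<noteq> 0"
    have "pC (z0 + t *s z1) = pC (t *s (z1 + inverse t *s z0))"
      by (rule arg_cong[where f=pC]) (use t in \<open>simp add: vec_eq_iff field_simps\<close>)
    also have "\<dots> = t ^ d * pC (z1 + inverse t *s z0)" by (rule pC_hom)
    finally have "poly P t = t ^ d * poly R (inverse t)" using P[of t] R[of "inverse t"] by simp
    thus "poly (monom 1 (degree R) * P) t = poly (monom 1 d * reflect_poly R) t"
      using t by (simp add: poly_monom poly_reflect_poly_nz)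
  qed
  have c: "coeff P m = coeff (reflect_poly R) (m + degree R - d)" if "m \<ge> d" for m
  proof -
    have "coeff (monom 1 (degree R) * P) (m + degree R) = coeff (monom 1 d * reflect_poly R) (m + degree R)"
      using eq by simp
    thus ?thesis using that by (simp add: coeff_monom_mult)
  qed
  have "degree P \<le> d"
  proof (rule degree_le, intro allI impI)
    fix m assume "d < m"
    thus "coeff P m = 0" using c[of m] by (simp add: coeff_reflect_poly)
  qed
  moreover have "coeff P d = pC z1"
    using c[of d] R[of 0] by (simp add: coeff_reflect_poly poly_0_coeff_0)
  ultimately show ?thesis using P by blast
qed

lemma root_near_line:
  assumes "\<epsilon> > 0" "norm (pC (z0 + t0 *s z1)) < norm (pC z1) * \<epsilon> ^ d"
  shows "\<exists>t. pC (z0 + t *s z1) = 0 \<and> norm (t - t0) < \<epsilon>"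
proof (rule ccontr)
  assume H: "\<not> ?thesis"
  obtain P where P: "\<And>t. pC (z0 + t *s z1) = poly P t" "degree P \<le> d" "coeff P d = pC z1"
    using line_lead by blast
  have "pC z1 \<noteq> 0" using assms(2) by (auto simp: le_less_trans[OF norm_ge_zero])
  hence "degree P = d" using P by (metis le_antisym le_degree)
  hence lead: "lead_coeff P = pC z1" using P by simp
  have "\<And>r. poly P r = 0 \<Longrightarrow> \<epsilon> \<le> norm (t0 - r)"
    using H P(1) by (metis norm_minus_commute not_less)
  hence "norm (lead_coeff P) * \<epsilon> ^ degree P \<le> norm (poly P t0)"
    by (intro root_near_aux assms(1))
  hence "norm (pC z1) * \<epsilon> ^ d \<le> norm (poly P t0)"
    using lead \<open>degree P = d\<close> by simp
  thus False using assms(2) P(1) by simp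
qed

end


lemma cont_smult[continuous_intros]:
  fixes f :: "'a::topological_space \<Rightarrow> complex" and g :: "'a \<Rightarrow> complex^'n"
  assumes "continuous_on S f" "continuous_on S g"
  shows "continuous_on S (\<lambda>x. f x *s g x)"
  unfolding vector_scalar_mult_def
  by (intro continuous_intros assms)

lemma poly_map_of_real: "poly (map_poly complex_of_real q) (of_real x) = of_real (poly q x)"
  by (induction q) (auto simp: map_poly_pCons)

context hsetup
begin

lemma hyp_complex:
  assumes "pC (cvec y + s *s cvec e0) = 0"
  shows "s \<in> \<real>"
proof -
  obtain q where q: "\<And>t. poly q t = p (t *\<^sub>R e0 - (- y))"
    "\<And>z. poly (map_poly complex_of_real q) z = 0 \<Longrightarrow> z \<in> \<real>"
    using hyp unfolding hyperbolic_in_def by blast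
  obtain P where P: "\<And>t. pC (cvec y + t *s cvec e0) = poly P t" using pC_line by blast
  have "P = map_poly complex_of_real q"
  proof (rule poly_eq_reals)
    fix x :: real
    have "cvec y + of_real x *s cvec e0 = cvec (y + x *\<^sub>R e0)"
      by (simp add: vec_eq_iff cvec_def)
    hence "poly P (of_real x) = of_real (p (y + x *\<^sub>R e0))" using P[of "of_real x"] by (simp add: pC_real)
    also have "\<dots> = of_real (poly q x)" using q(1)[of x] by (simp add: algebra_simps)
    finally show "poly P (of_real x) = poly (map_poly complex_of_real q) (of_real x)"
      by (simp add: poly_map_of_real)
  qed
  thus ?thesis using assms P q(2) by metis
qed

lemma open_part:
  assumes Z0: "continuous_on {0..1} Z0" and Z1: "continuous_on {0..1} Z1"
    and l0: "l0 \<in> {0..1::real}" and r: "pC (Z0 l0 + t0 *s Z1 l0) = 0" and e: "\<epsilon> > 0"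
    and nz: "pC (Z1 l0) \<noteq> 0"
  shows "\<exists>\<eta>>0. \<forall>l\<in>{0..1}. dist l l0 < \<eta> \<longrightarrow> (\<exists>t. pC (Z0 l + t *s Z1 l) = 0 \<and> norm (t - t0) < \<epsilon>)"
proof -
  define g where "g = (\<lambda>l. norm (pC (Z1 l)) * \<epsilon> ^ d - norm (pC (Z0 l + t0 *s Z1 l)))"
  have gc: "continuous_on {0..1} g" unfolding g_def
    by (intro continuous_intros continuous_on_compose2[OF pC_cont] Z0 Z1) auto
  have g0: "g l0 > 0" using r e nz by (simp add: g_def)
  obtain \<eta> where eta: "\<eta> > 0" "\<forall>l\<in>{0..1}. dist l l0 < \<eta> \<longrightarrow> dist (g l) (g l0) < g l0"
    using gc l0 g0 unfolding continuous_on_iff by blast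
  show ?thesis
  proof (intro exI[of _ \<eta>] conjI ballI impI)
    fix l :: real assume l: "l \<in> {0..1}" "dist l l0 < \<eta>"
    hence "g l > 0" using eta by (auto simp: dist_real_def)
    hence "norm (pC (Z0 l + t0 *s Z1 l)) < norm (pC (Z1 l)) * \<epsilon> ^ d" by (simp add: g_def)
    thus "\<exists>t. pC (Z0 l + t *s Z1 l) = 0 \<and> norm (t - t0) < \<epsilon>"
      using root_near_line[OF e] by blast
  qed (use eta in auto)
qed

lemma root_bound:
  assumes Z0: "continuous_on {0..1} Z0" and Z1: "continuous_on {0..1} Z1"
    and nz: "\<And>l. l \<in> {0..1::real} \<Longrightarrow> pC (Z1 l) \<noteq> 0"
  shows "\<exists>R>0. \<forall>l\<in>{0..1}. \<forall>t. pC (Z0 l + t *s Z1 l) = 0 \<longrightarrow> norm t \<le> R"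
proof -
  define K where "K = (\<lambda>x. pC (Z1 (fst x) + snd x *s Z0 (fst x)))"
  define S where "S = {0..1::real} \<times> cball (0::complex) 1"
  have cS: "compact S" unfolding S_def by (intro compact_Times compact_Icc compact_cball)
  have c0: "continuous_on S (\<lambda>x. Z0 (fst x))"
    by (rule continuous_on_compose2[OF Z0 continuous_on_fst[OF continuous_on_id]]) (auto simp: S_def)
  have c1: "continuous_on S (\<lambda>x. Z1 (fst x))"
    by (rule continuous_on_compose2[OF Z1 continuous_on_fst[OF continuous_on_id]]) (auto simp: S_def)
  have Kc: "continuous_on S K" unfolding K_def
    by (intro continuous_on_compose2[OF pC_cont] continuous_intros c0 c1) auto
  have uc: "uniformly_continuous_on S K" using compact_uniformly_continuous[OF Kc cS] .
  have "\<exists>x\<in>{0..1::real}. \<forall>y\<in>{0..1}. norm (pC (Z1 x)) \<le> norm (pC (Z1 y))"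
    by (intro continuous_attains_inf compact_Icc continuous_intros continuous_on_compose2[OF pC_cont Z1]) auto
  then obtain l1 where l1: "l1 \<in> {0..1::real}" "\<forall>l\<in>{0..1}. norm (pC (Z1 l1)) \<le> norm (pC (Z1 l))"
    by blast
  define m where "m = norm (pC (Z1 l1))"
  have m: "m > 0" using nz[OF l1(1)] by (simp add: m_def)
  obtain \<eta> where eta: "\<eta> > 0" "\<forall>x\<in>S. \<forall>x'\<in>S. dist x' x < \<eta> \<longrightarrow> dist (K x') (K x) < m"
    using uc m unfolding uniformly_continuous_on_def by metis
  define \<rho> where "\<rho> = min 1 (\<eta> / 2)"
  have rho: "\<rho> > 0" "\<rho> \<le> 1" "\<rho> < \<eta>" using eta by (auto simp: \<rho>_def)
  have Knz: "pC (Z1 l + z *s Z0 l) \<noteq> 0" if l: "l \<in> {0..1}" and z: "norm z < \<rho>" for l z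
  proof
    assume H: "pC (Z1 l + z *s Z0 l) = 0"
    have "(l, z) \<in> S" "(l, 0) \<in> S" using l z rho by (auto simp: S_def)
    moreover have "dist (l, z) (l, 0) < \<eta>" using z rho by (simp add: dist_Pair_Pair dist_norm)
    ultimately have "dist (K (l, z)) (K (l, 0)) < m" using eta by blast
    hence "norm (pC (Z1 l)) < m" using H by (simp add: K_def dist_norm)
    thus False using l1(2) l by (auto simp: m_def not_less[symmetric])
  qed
  show ?thesis
  proof (intro exI[of _ "1 / \<rho>"] conjI ballI allI impI)
    fix l t assume l: "l \<in> {0..1::real}" and r: "pC (Z0 l + t *s Z1 l) = 0"
    show "norm t \<le> 1 / \<rho>"
    proof (rule ccontr)
      assume "\<not> norm t \<le> 1 / \<rho>"
      hence nt: "norm t > 1 / \<rho>" by simp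
      hence t0: "t \<noteq> 0" using rho by auto
      have "inverse (norm t) < inverse (1 / \<rho>)"
        by (rule less_imp_inverse_less[OF nt]) (use rho in simp)
      hence "norm (inverse t) < \<rho>" by (simp add: norm_inverse)
      hence "pC (Z1 l + inverse t *s Z0 l) \<noteq> 0" using Knz l by blast
      moreover have eq: "Z0 l + t *s Z1 l = t *s (Z1 l + inverse t *s Z0 l)"
        using t0 by (simp add: vec_eq_iff field_simps)
      have "pC (Z0 l + t *s Z1 l) = t ^ d * pC (Z1 l + inverse t *s Z0 l)"
        by (simp only: eq pC_hom)
      ultimately show False using r t0 by simp
    qed
  qed (use rho in auto)
qed

end


context hsetup
begin

lemma homotopy:
  assumes Z0: "continuous_on {0..1} Z0" and Z1: "continuous_on {0..1} Z1"
    and nz: "\<And>l. l \<in> {0..1::real} \<Longrightarrow> pC (Z1 l) \<noteq> 0"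
    and V: "open V" and VB: "closed (V \<union> B)"
    and Bnz: "\<And>l t. l \<in> {0..1} \<Longrightarrow> t \<in> B \<Longrightarrow> pC (Z0 l + t *s Z1 l) \<noteq> 0"
    and start: "\<And>t. t \<in> V \<Longrightarrow> pC (Z0 0 + t *s Z1 0) \<noteq> 0"
    and tV: "t \<in> V"
  shows "pC (Z0 1 + t *s Z1 1) \<noteq> 0"
proof -
  define U where "U = {0..1::real}"
  define S where "S = {l\<in>U. \<exists>t\<in>V. pC (Z0 l + t *s Z1 l) = 0}"
  have op: "openin (top_of_set U) S"
    unfolding openin_euclidean_subtopology_iff
  proof (intro conjI ballI)
    show "S \<subseteq> U" by (auto simp: S_def)
  next
    fix l0 assume "l0 \<in> S"
    then obtain t0 where l0: "l0 \<in> U" "t0 \<in> V" "pC (Z0 l0 + t0 *s Z1 l0) = 0" by (auto simp: S_def)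
    obtain \<epsilon> where e: "\<epsilon> > 0" "ball t0 \<epsilon> \<subseteq> V" using V l0(2) open_contains_ball by blast
    obtain \<eta> where eta: "\<eta> > 0" "\<forall>l\<in>{0..1}. dist l l0 < \<eta> \<longrightarrow> (\<exists>t. pC (Z0 l + t *s Z1 l) = 0 \<and> norm (t - t0) < \<epsilon>)"
      using open_part[OF Z0 Z1 _ l0(3) e(1) nz] l0(1) by (auto simp: U_def)
    show "\<exists>e>0. \<forall>x'\<in>U. dist x' l0 < e \<longrightarrow> x' \<in> S"
    proof (intro exI[of _ \<eta>] conjI ballI impI)
      fix l assume "l \<in> U" "dist l l0 < \<eta>"
      then obtain t where t: "pC (Z0 l + t *s Z1 l) = 0" "norm (t - t0) < \<epsilon>" using eta by (auto simp: U_def)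
      hence "t \<in> V" using e(2) by (auto simp: dist_norm norm_minus_commute)
      thus "l \<in> S" using t \<open>l \<in> U\<close> by (auto simp: S_def)
    qed (use eta in auto)
  qed
  obtain R where R: "R > 0" "\<forall>l\<in>{0..1}. \<forall>t. pC (Z0 l + t *s Z1 l) = 0 \<longrightarrow> norm t \<le> R"
    using root_bound[OF Z0 Z1 nz] by blast
  have cl: "closedin (top_of_set U) S"
    unfolding closedin_def topspace_euclidean_subtopology openin_euclidean_subtopology_iff
  proof (intro conjI ballI)
    show "S \<subseteq> U" "U - S \<subseteq> U" by (auto simp: S_def)
  next
    fix l0 assume l0: "l0 \<in> U - S"
    define W where "W = - (V \<union> B)"
    have oW: "open W" using VB unfolding W_def by (rule open_Compl)
    define Zs where "Zs = {t. pC (Z0 l0 + t *s Z1 l0) = 0}"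
    have ZW: "Zs \<subseteq> W" using l0 Bnz by (auto simp: Zs_def W_def S_def U_def)
    have fin: "finite Zs"
    proof -
      obtain P where P: "\<And>t. pC (Z0 l0 + t *s Z1 l0) = poly P t" "degree P \<le> d" "coeff P d = pC (Z1 l0)"
        using line_lead by blast
      have "P \<noteq> 0" using P(3) nz l0 by (auto simp: U_def)
      thus ?thesis unfolding Zs_def P(1) by (rule poly_roots_finite)
    qed
    have "\<forall>r\<in>Zs. eventually (\<lambda>\<delta>. ball r \<delta> \<subseteq> W) (at_right (0::real))"
    proof
      fix r assume "r \<in> Zs"
      then obtain \<delta>0 where "\<delta>0 > 0" "ball r \<delta>0 \<subseteq> W" using ZW oW open_contains_ball by blast
      thus "eventually (\<lambda>\<delta>. ball r \<delta> \<subseteq> W) (at_right (0::real))"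
        unfolding eventually_at_right[OF \<open>\<delta>0 > 0\<close>]
        by (intro exI[of _ \<delta>0]) auto
    qed
    hence "eventually (\<lambda>\<delta>. \<forall>r\<in>Zs. ball r \<delta> \<subseteq> W) (at_right (0::real))"
      by (rule eventually_ball_finite[OF fin])
    then obtain b :: real where b: "b > 0" "\<forall>y>0. y < b \<longrightarrow> (\<forall>r\<in>Zs. ball r y \<subseteq> W)"
      unfolding eventually_at_right_field by blast
    define \<delta> where "\<delta> = b / 2"
    have dl: "\<delta> > 0" "\<forall>r\<in>Zs. ball r \<delta> \<subseteq> W" using b by (auto simp: \<delta>_def)
    define G where "G = (\<lambda>x. pC (Z0 (fst x) + snd x *s Z1 (fst x)))"
    define T where "T = U \<times> cball (0::complex) R"
    have cT: "compact T" unfolding T_def U_def by (intro compact_Times compact_Icc compact_cball)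
    have c0: "continuous_on T (\<lambda>x. Z0 (fst x))"
      by (rule continuous_on_compose2[OF Z0 continuous_on_fst[OF continuous_on_id]]) (auto simp: T_def U_def)
    have c1: "continuous_on T (\<lambda>x. Z1 (fst x))"
      by (rule continuous_on_compose2[OF Z1 continuous_on_fst[OF continuous_on_id]]) (auto simp: T_def U_def)
    have Gc: "continuous_on T G" unfolding G_def
      by (intro continuous_on_compose2[OF pC_cont] continuous_intros c0 c1) auto
    have uc: "uniformly_continuous_on T G" using compact_uniformly_continuous[OF Gc cT] .
    define m where "m = norm (pC (Z1 l0)) * \<delta> ^ d"
    have m: "m > 0" using nz l0 dl by (auto simp: m_def U_def)
    obtain \<eta> where eta: "\<eta> > 0" "\<forall>x\<in>T. \<forall>x'\<in>T. dist x' x < \<eta> \<longrightarrow> dist (G x') (G x) < m"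
      using uc m unfolding uniformly_continuous_on_def by metis
    show "\<exists>e>0. \<forall>x'\<in>U. dist x' l0 < e \<longrightarrow> x' \<in> U - S"
    proof (intro exI[of _ \<eta>] conjI ballI impI)
      fix l assume l: "l \<in> U" "dist l l0 < \<eta>"
      show "l \<in> U - S"
      proof (rule ccontr)
        assume "l \<notin> U - S"
        then obtain t where t: "t \<in> V" "pC (Z0 l + t *s Z1 l) = 0" using l by (auto simp: S_def)
        have tR: "norm t \<le> R" using R(2) t(2) l(1) by (auto simp: U_def)
        have "(l0, t) \<in> T" "(l, t) \<in> T" using tR l l0 by (auto simp: T_def)
        moreover have "dist (l, t) (l0, t) < \<eta>" using l by (simp add: dist_Pair_Pair)
        ultimately have "dist (G (l, t)) (G (l0, t)) < m" using eta by blast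
        hence "norm (pC (Z0 l0 + t *s Z1 l0)) < norm (pC (Z1 l0)) * \<delta> ^ d"
          using t(2) by (simp add: G_def dist_norm m_def)
        then obtain r where r: "pC (Z0 l0 + r *s Z1 l0) = 0" "norm (r - t) < \<delta>"
          using root_near_line[OF dl(1)] by blast
        have "t \<in> ball r \<delta>" using r(2) by (simp add: dist_norm)
        moreover have "r \<in> Zs" using r(1) by (simp add: Zs_def)
        ultimately have "t \<in> W" using dl(2) by blast
        thus False using t(1) by (simp add: W_def)
      qed
    qed (use eta in auto)
  qed
  have "connected U" unfolding U_def by simp
  hence "S = {} \<or> S = U" using op cl connected_clopen by blast
  moreover have "0 \<notin> S" using start by (auto simp: S_def)
  moreover have "0 \<in> U" by (simp add: U_def)
  ultimately have "S = {}" by blast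
  thus ?thesis using tV by (auto simp: S_def U_def)
qed

end


lemma realvec_cvec[simp]: "realvec (cvec y)" by (simp add: realvec_def cvec_def)

lemma poly_cnj_real:
  assumes "\<forall>k. coeff P k \<in> \<real>"
  shows "poly P (cnj z) = cnj (poly P z)"
proof -
  have "map_poly cnj P = P" using assms by (intro poly_eqI) (simp add: coeff_map_poly Reals_cnj_iff)
  thus ?thesis using poly_cnj[of P z] by simp
qed

lemma open_Im_gt: "open {t::complex. Im t > 0}"
  by (rule open_Collect_less) (intro continuous_intros)+
lemma open_Re_gt: "open {t::complex. Re t > 0}"
  by (rule open_Collect_less) (intro continuous_intros)+
lemma closed_Im_ge: "closed ({t::complex. Im t > 0} \<union> {t. Im t = 0})"
proof -
  have "{t::complex. Im t > 0} \<union> {t. Im t = 0} = {t. 0 \<le> Im t}" by auto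
  thus ?thesis by (simp add: closed_Collect_le continuous_on_Im continuous_on_const continuous_on_id)
qed
lemma closed_Re_ge: "closed ({t::complex. Re t > 0} \<union> {t. Re t = 0})"
proof -
  have "{t::complex. Re t > 0} \<union> {t. Re t = 0} = {t. 0 \<le> Re t}" by auto
  thus ?thesis by (simp add: closed_Collect_le continuous_on_Re continuous_on_const continuous_on_id)
qed

lemma cont_cvec_path: "continuous_on {0..1::real} (\<lambda>l. complex_of_real (1 - l) *s cvec a + complex_of_real l *s cvec b)"
  by (intro continuous_intros)

lemma cvec_path: "complex_of_real (1 - l) *s cvec a + complex_of_real l *s cvec b = cvec ((1 - l) *\<^sub>R a + l *\<^sub>R b)"
  by (simp add: vec_eq_iff cvec_def algebra_simps)

context hsetup
begin

definition good :: "real^'n \<Rightarrow> bool" where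
  "good v \<longleftrightarrow> (\<forall>l\<in>{0..1::real}. p ((1 - l) *\<^sub>R e0 + l *\<^sub>R v) \<noteq> 0)"

lemma A1:
  assumes gv: "good v" and t: "Im t > 0"
  shows "pC ((cvec w + \<i> *s cvec e0) + t *s cvec v) \<noteq> 0"
proof -
  define Z0 where "Z0 = (\<lambda>l::real. cvec w + \<i> *s cvec e0)"
  define Z1 where "Z1 = (\<lambda>l. complex_of_real (1 - l) *s cvec e0 + complex_of_real l *s cvec v)"
  let ?Z0 = Z0 let ?Z1 = Z1
  have "pC (?Z0 1 + t *s ?Z1 1) \<noteq> 0"
  proof (rule homotopy[where V="{t. Im t > 0}" and B="{t. Im t = 0}"])
    show "continuous_on {0..1} ?Z0" unfolding Z0_def by (intro continuous_intros)
    show "continuous_on {0..1} ?Z1" unfolding Z1_def by (rule cont_cvec_path)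
    show "pC (?Z1 l) \<noteq> 0" if "l \<in> {0..1}" for l
      using gv that unfolding Z1_def cvec_path by (simp add: pC_real good_def)
    show "open {t. Im t > 0}" by (rule open_Im_gt)
    show "closed ({t. Im t > 0} \<union> {t. Im t = 0})" by (rule closed_Im_ge)
    show "pC (?Z0 l + s *s ?Z1 l) \<noteq> 0" if "l \<in> {0..1}" "s \<in> {t. Im t = 0}" for l s
    proof
      assume H: "pC (?Z0 l + s *s ?Z1 l) = 0"
      have "s = of_real (Re s)" using that by (simp add: complex_eq_iff)
      hence "?Z0 l + s *s ?Z1 l = cvec (w + Re s *\<^sub>R ((1 - l) *\<^sub>R e0 + l *\<^sub>R v)) + \<i> *s cvec e0"
        by (simp add: Z0_def Z1_def vec_eq_iff cvec_def algebra_simps)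
      hence "\<i> \<in> \<real>" using H hyp_complex by metis
      thus False by (simp add: complex_is_Real_iff)
    qed
    show "pC (?Z0 0 + s *s ?Z1 0) \<noteq> 0" if "s \<in> {t. Im t > 0}" for s
    proof
      assume H: "pC (?Z0 0 + s *s ?Z1 0) = 0"
      have "?Z0 0 + s *s ?Z1 0 = cvec w + (\<i> + s) *s cvec e0"
        by (simp add: Z0_def Z1_def vec_eq_iff cvec_def algebra_simps)
      hence "\<i> + s \<in> \<real>" using H hyp_complex by metis
      thus False using that by (simp add: complex_is_Real_iff)
    qed
    show "t \<in> {t. Im t > 0}" using t by simp
  qed
  thus ?thesis by (simp add: Z0_def Z1_def)
qed

lemma A2:
  assumes gv: "good v" and t: "Im t > 0" and e: "\<epsilon> > 0"
  shows "pC (cvec w + (\<i> * of_real \<epsilon>) *s cvec e0 + t *s cvec v) \<noteq> 0"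
proof -
  have eq: "cvec w + (\<i> * of_real \<epsilon>) *s cvec e0 + t *s cvec v =
      of_real \<epsilon> *s ((cvec ((1 / \<epsilon>) *\<^sub>R w) + \<i> *s cvec e0) + (t / of_real \<epsilon>) *s cvec v)"
    using e by (simp add: vec_eq_iff cvec_def field_simps)
  have "Im (t / of_real \<epsilon>) > 0" using t e by (simp add: Im_divide_of_real)
  hence "pC ((cvec ((1 / \<epsilon>) *\<^sub>R w) + \<i> *s cvec e0) + (t / of_real \<epsilon>) *s cvec v) \<noteq> 0"
    using A1[OF gv] by blast
  thus ?thesis using e by (simp only: eq pC_hom) simp
qed

lemma hyp_dir:
  assumes gv: "good v" and r: "pC (cvec w + t0 *s cvec v) = 0"
  shows "t0 \<in> \<real>"
proof -
  have pv: "pC (cvec v) \<noteq> 0" using gv by (auto simp: good_def pC_real dest: bspec[of _ _ 1])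
  have main: False if r: "pC (cvec w + t0 *s cvec v) = 0" and t0: "Im t0 > 0" for t0
  proof -
    let ?Z0 = "\<lambda>l::real. cvec w + (\<i> * of_real l) *s cvec e0"
    let ?Z1 = "\<lambda>l::real. cvec v"
    have "\<exists>\<eta>>0. \<forall>l\<in>{0..1}. dist l 0 < \<eta> \<longrightarrow> (\<exists>t. pC (?Z0 l + t *s ?Z1 l) = 0 \<and> norm (t - t0) < Im t0 / 2)"
      by (rule open_part) (use r t0 pv in \<open>auto intro!: continuous_intros\<close>)
    then obtain \<eta> where eta: "\<eta> > 0" "\<forall>l\<in>{0..1}. dist l 0 < \<eta> \<longrightarrow> (\<exists>t. pC (?Z0 l + t *s ?Z1 l) = 0 \<and> norm (t - t0) < Im t0 / 2)"
      by blast
    define l where "l = min (\<eta> / 2) 1"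
    have l: "l \<in> {0..1}" "dist l 0 < \<eta>" "l > 0" using eta by (auto simp: l_def dist_real_def)
    then obtain t where t: "pC (?Z0 l + t *s ?Z1 l) = 0" "norm (t - t0) < Im t0 / 2" using eta by blast
    have "\<bar>Im (t - t0)\<bar> < Im t0 / 2" using t(2) abs_Im_le_cmod[of "t - t0"] by linarith
    moreover have "Im t0 - Im t \<le> \<bar>Im (t - t0)\<bar>" by simp
    ultimately have "Im t > 0" by linarith
    thus False using A2[OF gv _ l(3), of t w] t(1) by simp
  qed
  show ?thesis
  proof (rule ccontr)
    assume "t0 \<notin> \<real>"
    hence "Im t0 \<noteq> 0" by (simp add: complex_is_Real_iff)
    show False
    proof (cases "Im t0 > 0")
      case True thus False using main r by blast
    next
      case False
      hence "Im (cnj t0) > 0" using \<open>Im t0 \<noteq> 0\<close> by simp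
      obtain P where P: "\<And>t. pC (cvec w + t *s cvec v) = poly P t" "\<forall>k. coeff P k \<in> \<real>"
        using pC_line[of "cvec w" "cvec v"] by auto
      have "pC (cvec w + cnj t0 *s cvec v) = 0" using r P poly_cnj_real[OF P(2), of t0] by simp
      thus False using main \<open>Im (cnj t0) > 0\<close> by blast
    qed
  qed
qed

end


context hsetup
begin

lemma p_neg: "p (- x) = (-1) ^ d * p x"
  using hom unfolding homogeneous_deg_def by (metis scaleR_minus1_left)

lemma hcone_shift:
  assumes "x \<in> hcone p e0" "\<sigma> > 0"
  shows "p (x + \<sigma> *\<^sub>R e0) \<noteq> 0"
proof
  assume H: "p (x + \<sigma> *\<^sub>R e0) = 0"
  have eqn: "(- \<sigma>) *\<^sub>R e0 - x = - (x + \<sigma> *\<^sub>R e0)" by (simp add: algebra_simps)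
  have "p ((- \<sigma>) *\<^sub>R e0 - x) = (-1) ^ d * p (x + \<sigma> *\<^sub>R e0)"
    unfolding eqn by (rule p_neg)
  hence "p ((- \<sigma>) *\<^sub>R e0 - x) = 0" using H by simp
  hence "- \<sigma> \<ge> 0" using assms(1) unfolding hcone_def by blast
  thus False using assms(2) by simp
qed

lemma hcone_int_shift:
  assumes "x \<in> hcone_int p e0" "\<sigma> \<ge> 0"
  shows "p (x + \<sigma> *\<^sub>R e0) \<noteq> 0"
proof
  assume H: "p (x + \<sigma> *\<^sub>R e0) = 0"
  have eqn: "(- \<sigma>) *\<^sub>R e0 - x = - (x + \<sigma> *\<^sub>R e0)" by (simp add: algebra_simps)
  have "p ((- \<sigma>) *\<^sub>R e0 - x) = (-1) ^ d * p (x + \<sigma> *\<^sub>R e0)"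
    unfolding eqn by (rule p_neg)
  hence "p ((- \<sigma>) *\<^sub>R e0 - x) = 0" using H by simp
  hence "- \<sigma> > 0" using assms(1) unfolding hcone_int_def by blast
  thus False using assms(2) by simp
qed

lemma good_int:
  assumes "e \<in> hcone_int p e0"
  shows "good e"
  unfolding good_def
proof
  fix l :: real assume l: "l \<in> {0..1}"
  show "p ((1 - l) *\<^sub>R e0 + l *\<^sub>R e) \<noteq> 0"
  proof (cases "l = 0")
    case True thus ?thesis using hyp by (simp add: hyperbolic_in_def)
  next
    case False
    hence lp: "l > 0" using l by simp
    have "l *\<^sub>R (e + ((1 - l) / l) *\<^sub>R e0) = l *\<^sub>R e + (l * ((1 - l) / l)) *\<^sub>R e0"
      by (simp add: algebra_simps)
    also have "l * ((1 - l) / l) = 1 - l" using lp by simp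
    finally have "(1 - l) *\<^sub>R e0 + l *\<^sub>R e = l *\<^sub>R (e + ((1 - l) / l) *\<^sub>R e0)"
      by (simp add: algebra_simps)
    hence "p ((1 - l) *\<^sub>R e0 + l *\<^sub>R e) = l ^ d * p (e + ((1 - l) / l) *\<^sub>R e0)"
      using hom by (simp add: homogeneous_deg_def)
    moreover have "p (e + ((1 - l) / l) *\<^sub>R e0) \<noteq> 0"
      using hcone_int_shift[OF assms] l lp by simp
    ultimately show ?thesis using lp by simp
  qed
qed

lemma good_path:
  assumes "good e" "l \<in> {0..1::real}"
  shows "good ((1 - l) *\<^sub>R e0 + l *\<^sub>R e)"
  unfolding good_def
proof
  fix m :: real assume m: "m \<in> {0..1}"
  have "(1 - m) *\<^sub>R e0 + m *\<^sub>R ((1 - l) *\<^sub>R e0 + l *\<^sub>R e) = (1 - m * l) *\<^sub>R e0 + (m * l) *\<^sub>R e"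
    by (simp add: algebra_simps)
  moreover have "m * l \<in> {0..1}" using m assms(2) by (auto intro: mult_le_one)
  ultimately show "p ((1 - m) *\<^sub>R e0 + m *\<^sub>R ((1 - l) *\<^sub>R e0 + l *\<^sub>R e)) \<noteq> 0"
    using assms(1) by (simp add: good_def)
qed

lemma S2a:
  assumes x: "x \<in> hcone p e0" and ge: "good e" and dl: "\<delta> > 0" and t: "Re t > 0"
  shows "pC (cvec (x + \<delta> *\<^sub>R e0) + t *s cvec e) \<noteq> 0"
proof -
  define Z0 where "Z0 = (\<lambda>l::real. cvec (x + \<delta> *\<^sub>R e0))"
  define Z1 where "Z1 = (\<lambda>l. complex_of_real (1 - l) *s cvec e0 + complex_of_real l *s cvec e)"
  have px: "p (x + \<delta> *\<^sub>R e0) \<noteq> 0" using hcone_shift[OF x dl] .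
  have "pC (Z0 1 + t *s Z1 1) \<noteq> 0"
  proof (rule homotopy[where V="{t. Re t > 0}" and B="{t. Re t = 0}"])
    show "continuous_on {0..1} Z0" unfolding Z0_def by (intro continuous_intros)
    show "continuous_on {0..1} Z1" unfolding Z1_def by (rule cont_cvec_path)
    show "pC (Z1 l) \<noteq> 0" if "l \<in> {0..1}" for l
      using ge that unfolding Z1_def cvec_path by (simp add: pC_real good_def)
    show "open {t. Re t > 0}" by (rule open_Re_gt)
    show "closed ({t. Re t > 0} \<union> {t. Re t = 0})" by (rule closed_Re_ge)
    show "pC (Z0 l + s *s Z1 l) \<noteq> 0" if l: "l \<in> {0..1}" and s: "s \<in> {t. Re t = 0}" for l s
    proof
      assume H: "pC (Z0 l + s *s Z1 l) = 0"
      hence "pC (cvec (x + \<delta> *\<^sub>R e0) + s *s cvec ((1 - l) *\<^sub>R e0 + l *\<^sub>R e)) = 0"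
        unfolding Z0_def Z1_def cvec_path .
      hence "s \<in> \<real>" using hyp_dir[OF good_path[OF ge l]] by blast
      hence "s = 0" using s by (simp add: complex_is_Real_iff complex_eq_iff)
      thus False using H px by (simp add: Z0_def pC_real)
    qed
    show "pC (Z0 0 + s *s Z1 0) \<noteq> 0" if s: "s \<in> {t. Re t > 0}" for s
    proof
      assume H: "pC (Z0 0 + s *s Z1 0) = 0"
      hence H': "pC (cvec (x + \<delta> *\<^sub>R e0) + s *s cvec e0) = 0" by (simp add: Z0_def Z1_def)
      hence "s \<in> \<real>" using hyp_complex by blast
      hence "s = of_real (Re s)" by (simp add: complex_eq_iff complex_is_Real_iff)
      hence "cvec (x + \<delta> *\<^sub>R e0) + s *s cvec e0 = cvec (x + (\<delta> + Re s) *\<^sub>R e0)"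
        by (simp add: vec_eq_iff cvec_def algebra_simps)
      hence "p (x + (\<delta> + Re s) *\<^sub>R e0) = 0" using H' by (simp add: pC_real)
      moreover have "\<delta> + Re s > 0" using s dl by simp
      ultimately show False using hcone_shift[OF x] by blast
    qed
    show "t \<in> {t. Re t > 0}" using t by simp
  qed
  thus ?thesis by (simp add: Z0_def Z1_def)
qed

lemma S2:
  assumes x: "x \<in> hcone p e0" and ge: "good e" and tau: "\<tau> > 0"
  shows "p (x + \<tau> *\<^sub>R e) \<noteq> 0"
proof
  assume r0: "p (x + \<tau> *\<^sub>R e) = 0"
  have pe: "pC (cvec e) \<noteq> 0" using ge by (auto simp: good_def pC_real dest: bspec[of _ _ 1])
  define Z0 where "Z0 = (\<lambda>l::real. cvec x + complex_of_real l *s cvec e0)"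
  define Z1 where "Z1 = (\<lambda>l::real. cvec e)"
  have r: "pC (Z0 0 + complex_of_real \<tau> *s Z1 0) = 0"
  proof -
    have "Z0 0 + complex_of_real \<tau> *s Z1 0 = cvec (x + \<tau> *\<^sub>R e)"
      by (simp add: Z0_def Z1_def vec_eq_iff cvec_def)
    thus ?thesis using r0 by (simp add: pC_real)
  qed
  have "\<exists>\<eta>>0. \<forall>l\<in>{0..1}. dist l 0 < \<eta> \<longrightarrow> (\<exists>t. pC (Z0 l + t *s Z1 l) = 0 \<and> norm (t - complex_of_real \<tau>) < \<tau> / 2)"
    by (rule open_part) (use r tau pe in \<open>auto simp: Z0_def Z1_def intro!: continuous_intros\<close>)
  then obtain \<eta> where eta: "\<eta> > 0" "\<forall>l\<in>{0..1}. dist l 0 < \<eta> \<longrightarrow> (\<exists>t. pC (Z0 l + t *s Z1 l) = 0 \<and> norm (t - complex_of_real \<tau>) < \<tau> / 2)"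
    by blast
  define l where "l = min (\<eta> / 2) 1"
  have l: "l \<in> {0..1}" "dist l 0 < \<eta>" "l > 0" using eta by (auto simp: l_def dist_real_def)
  then obtain t where t: "pC (Z0 l + t *s Z1 l) = 0" "norm (t - complex_of_real \<tau>) < \<tau> / 2" using eta by blast
  have "\<bar>Re (t - complex_of_real \<tau>)\<bar> < \<tau> / 2" using t(2) abs_Re_le_cmod[of "t - complex_of_real \<tau>"] by linarith
  moreover have "\<tau> - Re t \<le> \<bar>Re (t - complex_of_real \<tau>)\<bar>" by simp
  ultimately have "Re t > 0" by linarith
  moreover have "Z0 l = cvec (x + l *\<^sub>R e0)" by (simp add: Z0_def vec_eq_iff cvec_def)
  ultimately show False using S2a[OF x ge l(3), of t] t(1) by (simp add: Z1_def)
qed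

lemma roots_final:
  assumes x: "x \<in> hcone p e0" and e: "e \<in> hcone_int p e0" and s: "pC (cvec e + s *s cvec x) = 0"
  shows "s \<in> \<real> \<and> Re s < 0"
proof -
  have ge: "good e" using good_int[OF e] .
  have pe: "p e \<noteq> 0" using hcone_int_shift[OF e, of 0] by simp
  have s0: "s \<noteq> 0" using s pe by (auto simp: pC_real)
  have eq: "cvec e + s *s cvec x = s *s (cvec x + inverse s *s cvec e)"
    using s0 by (simp add: vec_eq_iff field_simps)
  have "pC (cvec e + s *s cvec x) = s ^ d * pC (cvec x + inverse s *s cvec e)"
    by (simp only: eq pC_hom)
  hence r: "pC (cvec x + inverse s *s cvec e) = 0" using s s0 by simp
  hence "inverse s \<in> \<real>" using hyp_dir[OF ge] by blast
  hence sR: "s \<in> \<real>" by simp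
  then obtain a where a: "s = of_real a" by (auto elim: Reals_cases)
  have "a \<noteq> 0" using s0 a by simp
  moreover have "\<not> a > 0"
  proof
    assume "a > 0"
    hence "p (x + inverse a *\<^sub>R e) \<noteq> 0" using S2[OF x ge] by simp
    moreover have "cvec x + inverse s *s cvec e = cvec (x + inverse a *\<^sub>R e)"
      using a by (simp add: vec_eq_iff cvec_def)
    ultimately show False using r by (simp add: pC_real)
  qed
  ultimately show ?thesis using sR a by simp
qed

end


lemma map_of_real_mult:
  "map_poly complex_of_real (A * B) = map_poly complex_of_real A * map_poly complex_of_real B"
  by (rule poly_eqI) (simp add: coeff_map_poly coeff_mult of_real_sum)

lemma sign_coeffs:
  fixes H :: "real poly"
  assumes "\<forall>z. poly (map_poly complex_of_real H) z = 0 \<longrightarrow> z \<in> \<real> \<and> Re z < 0"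
  shows "\<forall>k. coeff H k * lead_coeff H \<ge> 0"
  using assms
proof (induction "degree H" arbitrary: H)
  case 0
  then obtain c where "H = [:c:]" by (metis degree_eq_zeroE)
  thus ?case by (auto simp: coeff_pCons split: nat.splits)
next
  case (Suc n)
  have dm: "degree (map_poly complex_of_real H) = degree H" by (rule degree_map_poly) simp
  hence "\<not> constant (poly (map_poly complex_of_real H))" using Suc.hyps(2) by (subst constant_degree) simp
  then obtain z where z: "poly (map_poly complex_of_real H) z = 0" using fundamental_theorem_of_algebra by blast
  hence zr: "z \<in> \<real>" "Re z < 0" using Suc.prems by auto
  define r where "r = Re z"
  have zr2: "z = of_real r" using zr(1) by (simp add: r_def complex_eq_iff complex_is_Real_iff)
  have "of_real (poly H r) = (0::complex)" using z zr2 poly_map_of_real by metis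
  hence "poly H r = 0" by simp
  then obtain Q where HQ: "H = [:-r, 1:] * Q" by (metis dvdE poly_eq_0_iff_dvd)
  have Q0: "Q \<noteq> 0" using HQ Suc.hyps(2) by auto
  have "degree ([:-r, 1:] * Q) = degree [:-r, 1:] + degree Q"
    by (rule degree_mult_eq) (use Q0 in auto)
  hence dQ: "degree Q = n" using HQ Suc.hyps(2) by simp
  have "lead_coeff ([:-r, 1:] * Q) = lead_coeff [:-r, 1:] * lead_coeff Q"
    by (rule lead_coeff_mult)
  hence lQ: "lead_coeff H = lead_coeff Q" using HQ by (simp del: mult_pCons_left)
  have "\<forall>w. poly (map_poly complex_of_real Q) w = 0 \<longrightarrow> w \<in> \<real> \<and> Re w < 0"
  proof (intro allI impI)
    fix w assume "poly (map_poly complex_of_real Q) w = 0"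
    hence "poly (map_poly complex_of_real H) w = 0" unfolding HQ map_of_real_mult by simp
    thus "w \<in> \<real> \<and> Re w < 0" using Suc.prems by blast
  qed
  hence IH: "\<forall>k. coeff Q k * lead_coeff Q \<ge> 0" using Suc.hyps(1) dQ by blast
  have rn: "r < 0" using zr by (simp add: r_def)
  show ?case
  proof
    fix k
    have ck: "coeff H k = - r * coeff Q k + (case k of 0 \<Rightarrow> 0 | Suc j \<Rightarrow> coeff Q j)"
      unfolding HQ by (simp add: coeff_pCons split: nat.splits)
    have t1: "- r * coeff Q k * lead_coeff Q \<ge> 0"
      using IH rn by (metis mult.assoc mult_nonneg_nonneg neg_0_less_iff_less less_imp_le)
    have t2: "(case k of 0 \<Rightarrow> 0 | Suc j \<Rightarrow> coeff Q j) * lead_coeff Q \<ge> 0"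
      using IH by (simp split: nat.splits)
    show "coeff H k * lead_coeff H \<ge> 0" unfolding ck lQ using t1 t2 by (simp add: algebra_simps)
  qed
qed

lemma ln_abs_real: "ln \<bar>x\<bar> = ln (x::real)"
  by (cases "x \<ge> 0") (auto simp: ln_minus)

lemma DERIV_ln_nz: "x \<noteq> 0 \<Longrightarrow> DERIV ln x :> inverse (x::real)"
proof (cases "x > 0")
  case True thus ?thesis by (rule DERIV_ln)
next
  case False
  assume "x \<noteq> 0"
  hence xn: "x < 0" using False by simp
  have "((\<lambda>y. ln (- y)) has_real_derivative inverse (- x) * (- 1)) (at x)"
    by (rule DERIV_chain2[OF DERIV_ln]) (use xn in \<open>auto intro!: derivative_eq_intros\<close>)
  moreover have "(\<lambda>y. ln (- y)) = (ln :: real \<Rightarrow> real)" by (simp add: ln_minus fun_eq_iff)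
  ultimately show ?thesis by simp
qed

lemma DERIV_ln_comp:
  assumes "(f has_real_derivative f') (at x)" "f x \<noteq> 0"
  shows "((\<lambda>y. ln (f y)) has_real_derivative f' / f x) (at x)"
  using DERIV_chain2[OF DERIV_ln_nz[OF assms(2)] assms(1)] by (simp add: divide_inverse mult.commute)



context hsetup
begin

lemma quad_ok:
  assumes x: "x \<in> hcone p e0" and e: "e \<in> hcone_int p e0" and al: "0 < \<alpha>" "\<alpha> \<le> 1"
  shows "loc_inner p e e x \<ge> \<alpha> * loc_norm p e x"
proof -
  obtain P where P: "\<And>t. pC (cvec e + t *s cvec x) = poly P t" "\<forall>k. coeff P k \<in> \<real>"
    using pC_line[of "cvec e" "cvec x"] by auto
  define H where "H = map_poly Re P"
  have PH: "map_poly complex_of_real H = P"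
    by (rule poly_eqI) (use P(2) in \<open>auto simp: H_def coeff_map_poly complex_eq_iff complex_is_Real_iff\<close>)
  have hval: "poly H r = p (e + r *\<^sub>R x)" for r
  proof -
    have "complex_of_real (poly H r) = poly P (of_real r)" using poly_map_of_real[of H r] PH by simp
    also have "\<dots> = pC (cvec e + of_real r *s cvec x)" using P(1) by simp
    also have "cvec e + of_real r *s cvec x = cvec (e + r *\<^sub>R x)" by (simp add: vec_eq_iff cvec_def)
    finally show ?thesis by (simp add: pC_real)
  qed
  have roots: "\<forall>z. poly (map_poly complex_of_real H) z = 0 \<longrightarrow> z \<in> \<real> \<and> Re z < 0"
    using roots_final[OF x e] P(1) PH by auto
  have sg: "\<forall>k. coeff H k * lead_coeff H \<ge> 0" by (rule sign_coeffs[OF roots])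
  have pe: "p e \<noteq> 0" using hcone_int_shift[OF e, of 0] by simp
  have c0: "coeff H 0 = p e" using hval[of 0] by (simp add: poly_0_coeff_0)
  hence "H \<noteq> 0" using pe by auto
  hence L: "lead_coeff H \<noteq> 0" by simp
  have c0L: "coeff H 0 * lead_coeff H > 0" using sg c0 pe L
    by (metis less_eq_real_def mult_eq_0_iff)
  have ratio: "coeff H k / coeff H 0 \<ge> 0" for k
  proof -
    have eq: "coeff H k / coeff H 0 = (coeff H k * lead_coeff H) / (coeff H 0 * lead_coeff H)"
      using L by simp
    have "0 \<le> (coeff H k * lead_coeff H) / (coeff H 0 * lead_coeff H)"
      by (rule divide_nonneg_pos) (use sg c0L in auto)
    thus ?thesis by (subst eq)
  qed
  define h0 where "h0 = poly H 0"
  define h1 where "h1 = poly (pderiv H) 0"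
  define h2 where "h2 = poly (pderiv (pderiv H)) 0"
  have h0: "h0 = coeff H 0" by (simp add: h0_def poly_0_coeff_0)
  have h1: "h1 = coeff H 1" by (simp add: h1_def poly_0_coeff_0 coeff_pderiv)
  have h2: "h2 = 2 * coeff H 2" by (simp add: h2_def poly_0_coeff_0 coeff_pderiv numeral_2_eq_2)
  have h0nz: "h0 \<noteq> 0" using h0 c0 pe by simp
  define a where "a = h1 / h0"
  define b where "b = h2 / h0"
  have a: "a \<ge> 0" using ratio[of 1] by (simp add: a_def h0 h1)
  have b: "b \<ge> 0" using ratio[of 2] by (simp add: b_def h0 h2)
  have evH: "\<forall>\<^sub>F s in nhds 0. poly H s \<noteq> 0"
    unfolding eventually_nhds
    by (intro exI[of _ "{s. poly H s \<noteq> 0}"]) (use h0nz in \<open>auto simp: h0_def intro!: open_Collect_neq continuous_intros\<close>)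
  have inner_xx: "deriv (\<lambda>t. - ln \<bar>p (e + s *\<^sub>R x + t *\<^sub>R x)\<bar>) 0 = - poly (pderiv H) s / poly H s"
    if hs: "poly H s \<noteq> 0" for s
  proof -
    have fe: "(\<lambda>t. - ln \<bar>p (e + s *\<^sub>R x + t *\<^sub>R x)\<bar>) = (\<lambda>t. - ln (poly H (s + t)))"
    proof
      fix t
      have eq: "e + s *\<^sub>R x + t *\<^sub>R x = e + (s + t) *\<^sub>R x" by (simp add: algebra_simps)
      show "- ln \<bar>p (e + s *\<^sub>R x + t *\<^sub>R x)\<bar> = - ln (poly H (s + t))"
        unfolding eq hval ln_abs_real ..
    qed
    have d1: "((\<lambda>t. poly H (s + t)) has_real_derivative poly (pderiv H) (s + 0) * 1) (at 0)"
      by (rule DERIV_chain2[OF poly_DERIV]) (auto intro!: derivative_eq_intros)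
    have "((\<lambda>t. - ln (poly H (s + t))) has_real_derivative - (poly (pderiv H) s / poly H (s + 0))) (at 0)"
      by (rule DERIV_minus, rule DERIV_ln_comp) (use d1 hs in auto)
    thus ?thesis unfolding fe by (simp add: DERIV_imp_deriv)
  qed
  have lxx: "loc_inner p e x x = a ^ 2 - b"
  proof -
    have "loc_inner p e x x = deriv (\<lambda>s. deriv (\<lambda>t. - ln \<bar>p (e + s *\<^sub>R x + t *\<^sub>R x)\<bar>) 0) 0"
      by (simp add: loc_inner_def hess_form_def)
    also have "\<dots> = deriv (\<lambda>s. - poly (pderiv H) s / poly H s) 0"
      by (rule deriv_cong_ev[OF _ refl]) (use evH inner_xx in \<open>auto elim!: eventually_mono\<close>)
    also have "\<dots> = (- h2 * h0 - (- h1) * h1) / (h0 * h0)"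
    proof (rule DERIV_imp_deriv)
      show "((\<lambda>s. - poly (pderiv H) s / poly H s) has_real_derivative (- h2 * h0 - (- h1) * h1) / (h0 * h0)) (at 0)"
        unfolding h0_def h1_def h2_def
        by (rule DERIV_divide) (use h0nz in \<open>auto simp: h0_def intro!: DERIV_minus\<close>)
    qed
    also have "\<dots> = a ^ 2 - b" using h0nz by (simp add: a_def b_def field_simps power2_eq_square)
    finally show ?thesis .
  qed
  have inner_ex: "deriv (\<lambda>t. - ln \<bar>p (e + s *\<^sub>R e + t *\<^sub>R x)\<bar>) 0 = - a / (1 + s)"
    if hs: "s > -1" for s
  proof -
    have s1: "1 + s > 0" using hs by simp
    have fe: "(\<lambda>t. - ln \<bar>p (e + s *\<^sub>R e + t *\<^sub>R x)\<bar>) = (\<lambda>t. - ln ((1 + s) ^ d * poly H (t / (1 + s))))"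
    proof
      fix t
      have tt: "(1 + s) * (t / (1 + s)) = t" using s1 by simp
      have "(1 + s) *\<^sub>R (e + (t / (1 + s)) *\<^sub>R x) = e + s *\<^sub>R e + ((1 + s) * (t / (1 + s))) *\<^sub>R x"
        by (simp add: algebra_simps)
      hence "e + s *\<^sub>R e + t *\<^sub>R x = (1 + s) *\<^sub>R (e + (t / (1 + s)) *\<^sub>R x)"
        unfolding tt by simp
      hence "p (e + s *\<^sub>R e + t *\<^sub>R x) = (1 + s) ^ d * p (e + (t / (1 + s)) *\<^sub>R x)"
        using hom by (simp add: homogeneous_deg_def)
      thus "- ln \<bar>p (e + s *\<^sub>R e + t *\<^sub>R x)\<bar> = - ln ((1 + s) ^ d * poly H (t / (1 + s)))"
        by (simp add: hval ln_abs_real)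
    qed
    have d1: "((\<lambda>t. poly H (t / (1 + s))) has_real_derivative poly (pderiv H) (0 / (1 + s)) * (1 / (1 + s))) (at 0)"
      by (rule DERIV_chain2[OF poly_DERIV]) (use s1 in \<open>auto intro!: derivative_eq_intros\<close>)
    hence d2: "((\<lambda>t. (1 + s) ^ d * poly H (t / (1 + s))) has_real_derivative (1 + s) ^ d * (h1 * (1 / (1 + s)))) (at 0)"
      unfolding h1_def by (intro DERIV_cmult) simp
    have "((\<lambda>t. - ln ((1 + s) ^ d * poly H (t / (1 + s)))) has_real_derivative
        - ((1 + s) ^ d * (h1 * (1 / (1 + s))) / ((1 + s) ^ d * poly H (0 / (1 + s))))) (at 0)"
      by (rule DERIV_minus, rule DERIV_ln_comp[OF d2]) (use s1 h0nz in \<open>auto simp: h0_def\<close>)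
    hence "deriv (\<lambda>t. - ln ((1 + s) ^ d * poly H (t / (1 + s)))) 0 =
        - ((1 + s) ^ d * (h1 * (1 / (1 + s))) / ((1 + s) ^ d * poly H (0 / (1 + s))))"
      by (rule DERIV_imp_deriv)
    also have "\<dots> = - a / (1 + s)"
    proof -
      have pd: "(1 + s) ^ d \<noteq> 0" using s1 by simp
      have "(1 + s) ^ d * (h1 * (1 / (1 + s))) / ((1 + s) ^ d * poly H (0 / (1 + s)))
          = h1 * (1 / (1 + s)) / h0" using pd by (simp add: h0_def)
      thus ?thesis by (simp add: a_def)
    qed
    finally show ?thesis unfolding fe .
  qed
  have lex: "loc_inner p e e x = a"
  proof -
    have ev: "\<forall>\<^sub>F s in nhds (0::real). s > -1"
      unfolding eventually_nhds by (intro exI[of _ "{-1<..}"]) auto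
    have "loc_inner p e e x = deriv (\<lambda>s. deriv (\<lambda>t. - ln \<bar>p (e + s *\<^sub>R e + t *\<^sub>R x)\<bar>) 0) 0"
      by (simp add: loc_inner_def hess_form_def)
    also have "\<dots> = deriv (\<lambda>s. - a / (1 + s)) 0"
      by (rule deriv_cong_ev[OF _ refl]) (use ev inner_ex in \<open>auto elim!: eventually_mono\<close>)
    also have "\<dots> = (0 * (1 + 0) - (- a) * (0 + 1)) / ((1 + 0) * (1 + 0))"
      by (rule DERIV_imp_deriv) (auto intro!: derivative_eq_intros)
    also have "\<dots> = a" by simp
    finally show ?thesis .
  qed
  show ?thesis
  proof (cases "a ^ 2 - b \<ge> 0")
    case True
    have "sqrt (a ^ 2 - b) \<le> sqrt (a ^ 2)" using b by (intro real_sqrt_le_mono) simp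
    also have "\<dots> = a" using a by simp
    finally have "sqrt (a ^ 2 - b) \<le> a" .
    moreover have "\<alpha> * sqrt (a ^ 2 - b) \<le> sqrt (a ^ 2 - b)"
    proof -
      have "0 \<le> sqrt (a ^ 2 - b)" using True by simp
      thus ?thesis using al mult_right_mono[of \<alpha> 1 "sqrt (a ^ 2 - b)"] by simp
    qed
    ultimately show ?thesis by (simp add: loc_norm_def lxx lex)
  next
    case False
    hence "sqrt (a ^ 2 - b) < 0" by simp
    hence "\<alpha> * sqrt (a ^ 2 - b) < 0" using al by (simp add: mult_pos_neg)
    thus ?thesis using a by (simp add: loc_norm_def lxx lex)
  qed
qed

end

theorem proposition3p3:
  fixes p :: "real^'n \<Rightarrow> real" and e0 e :: "real^'n" and d :: nat
    and A :: "real^'n^'m" and b :: "real^'m" and \<alpha> :: real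
  assumes "real_polynomial_function p"
    and "homogeneous_deg p d"
    and "hyperbolic_in p e0"
    and "\<And>L. subspace L \<Longrightarrow> L \<subseteq> hcone p e0 \<Longrightarrow> L = {0}"
    and "e \<in> hcone_int p e0"
    and "0 < \<alpha>" and "\<alpha> \<le> 1"
  shows "HP_feasible p e0 A b \<subseteq> QP_feasible p e \<alpha> A b"
proof -
  obtain pC where pC: "goodext p pC" using construct[OF assms(1)] by blast
  interpret hsetup p d e0 pC using pC assms(2,3) by unfold_locales
  show ?thesis
    unfolding HP_feasible_def QP_feasible_def quad_cone_def
    using quad_ok[OF _ assms(5,6,7)] by auto
qed

end
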